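(* Every $3$-uniform hypergraph with $7$ vertices and $30$ edges not containing a Fano plane is isomorphic to either $B_7$ or $J_7$.
   Context: Hypergraphs are $3$-uniform; "containing" means having a (not necessarily induced) subhypergraph isomorphic to it. The Fano plane is the hypergraph on vertex set $\{1,\dots,7\}$ with edges $123,345,156,147,367,257,246$ (the lines of the projective plane over the field with two elements). $B_7$ is the hypergraph on $7$ vertices with a partition $V=X\cup Y$ into disjoint sets of sizes $3$ and $4$ whose edges are exactly the triples meeting both $X$ and $Y$. $J_7$ is obtained from the complete $3$-uniform hypergraph on $7$ vertices by deleting the five edges containing a fixed pair of vertices. *)

theory Defs
  imports Main
begin

definition uniform3 :: "'a set \<Rightarrow> 'a set set \<Rightarrow> bool" where
  "uniform3 V E \<longleftrightarrow> finite V \<and> (\<forall>e\<in>E. e \<subseteq> V \<and> card e = 3)"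

definition contains_hg :: "'a set \<Rightarrow> 'a set set \<Rightarrow> 'b set \<Rightarrow> 'b set set \<Rightarrow> bool" where
  "contains_hg V E W F \<longleftrightarrow> (\<exists>f. inj_on f W \<and> f ` W \<subseteq> V \<and> (\<forall>e\<in>F. f ` e \<in> E))"

definition iso_hg :: "'a set \<Rightarrow> 'a set set \<Rightarrow> 'b set \<Rightarrow> 'b set set \<Rightarrow> bool" where
  "iso_hg V E W F \<longleftrightarrow> (\<exists>f. bij_betw f V W \<and> (\<lambda>e. f ` e) ` E = F)"

definition V7 :: "nat set" where "V7 = {1..7}"

definition fano :: "nat set set" where
  "fano = {{1,2,3},{3,4,5},{1,5,6},{1,4,7},{3,6,7},{2,5,7},{2,4,6}}"

definition B7 :: "nat set set" where
  "B7 = {e. e \<subseteq> V7 \<and> card e = 3 \<and> e \<inter> {1,2,3} \<noteq> {} \<and> e \<inter> {4,5,6,7} \<noteq> {}}"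

definition J7 :: "nat set set" where
  "J7 = {e. e \<subseteq> V7 \<and> card e = 3 \<and> \<not> {1,2} \<subseteq> e}"

end

theory Submission
  imports Defs
begin

definition Tlist :: "nat set list" where "Tlist = [{1,2,3}, {1,2,4}, {1,2,5}, {1,2,6}, {1,2,7}, {1,3,4}, {1,3,5}, {1,3,6}, {1,3,7}, {1,4,5}, {1,4,6}, {1,4,7}, {1,5,6}, {1,5,7}, {1,6,7}, {2,3,4}, {2,3,5}, {2,3,6}, {2,3,7}, {2,4,5}, {2,4,6}, {2,4,7}, {2,5,6}, {2,5,7}, {2,6,7}, {3,4,5}, {3,4,6}, {3,4,7}, {3,5,6}, {3,5,7}, {3,6,7}, {4,5,6}, {4,5,7}, {4,6,7}, {5,6,7}]"

lemma T7_sub0: "\<forall>e\<in>set Tlist. e \<subseteq> V7 \<and> card e = 3"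
  unfolding Tlist_def V7_def by code_simp
lemma T7_sub: "set Tlist \<subseteq> {e. e \<subseteq> V7 \<and> card e = 3}"
  using T7_sub0 by blast

lemma T7_sup: "{e. e \<subseteq> V7 \<and> card e = 3} \<subseteq> set Tlist"
proof
  fix e assume "e \<in> {e. e \<subseteq> V7 \<and> card e = 3}"
  then have s: "e \<subseteq> {1..7}" and c: "card e = 3" by (auto simp: V7_def)
  from c obtain x y z where e: "e = {x,y,z}" and d: "x \<noteq> y" "y \<noteq> z" "x \<noteq> z"
    by (auto simp: card_3_iff)
  have "x \<in> {1..7}" "y \<in> {1..7}" "z \<in> {1..7}" using s e by auto
  then have "x \<in> {1,2,3,4,5,6,7}" "y \<in> {1,2,3,4,5,6,7}" "z \<in> {1,2,3,4,5,6,7}" by auto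
  then show "e \<in> set Tlist" using d unfolding e Tlist_def
    by (simp only: insert_iff empty_iff) (elim disjE; simp add: insert_commute)
qed

lemma T7: "{e. e \<subseteq> V7 \<and> card e = 3} = set Tlist"
  using T7_sub T7_sup by blast

lemma card_T: "card (set Tlist) = 35"
  unfolding Tlist_def by code_simp

definition pl :: "nat list \<Rightarrow> nat set set" where
 "pl p = (\<lambda>e. (\<lambda>i. p ! (i - 1)) ` e) ` fano"
definition Slist :: "nat list list" where "Slist = [[1,2,4,3,5,6,7],[1,2,4,3,5,7,6],[1,2,4,3,6,5,7],[1,2,4,3,6,7,5],[1,2,4,3,7,5,6],[1,2,4,3,7,6,5],[1,2,5,3,4,6,7],[1,2,5,3,4,7,6],[1,2,5,3,6,4,7],[1,2,5,3,6,7,4],[1,2,5,3,7,4,6],[1,2,5,3,7,6,4],[1,2,6,3,4,7,5],[1,2,6,3,5,7,4],[1,2,6,3,7,4,5],[1,2,6,3,7,5,4],[1,2,7,3,4,6,5],[1,2,7,3,5,6,4],[1,2,7,3,6,4,5],[1,2,7,3,6,5,4]]"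

lemma deg: "\<forall>t \<in> set Tlist. length (filter (\<lambda>P. t \<in> P) (map pl Slist)) \<le> 6"
  unfolding Tlist_def Slist_def pl_def fano_def by code_simp

lemma avoid: "\<forall>P\<in>set (map pl Slist). {1,2,3} \<notin> P \<and> {1,4,5} \<notin> P"
  unfolding Slist_def pl_def fano_def by code_simp



lemma Sperm: "\<forall>p\<in>set Slist. distinct p \<and> length p = 7 \<and> set p \<subseteq> V7"
  unfolding Slist_def V7_def by code_simp

lemma SinT: "\<forall>p\<in>set Slist. pl p \<subseteq> set Tlist"
  unfolding Slist_def Tlist_def pl_def fano_def by code_simp



lemma perm_inj:
  assumes "distinct p" "length p = 7" "set p \<subseteq> V7"
  shows "inj_on (\<lambda>i. p!(i-1)) V7 \<and> (\<lambda>i. p!(i-1)) ` V7 \<subseteq> V7"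
proof
  show "inj_on (\<lambda>i. p!(i-1)) V7"
  proof (rule inj_onI)
    fix x y assume "x \<in> V7" "y \<in> V7" "p!(x-1) = p!(y-1)"
    then show "x = y" using assms nth_eq_iff_index_eq[of p "x-1" "y-1"] by (simp add: V7_def) linarith
  qed
  show "(\<lambda>i. p!(i-1)) ` V7 \<subseteq> V7"
  proof
    fix y assume "y \<in> (\<lambda>i. p!(i-1)) ` V7"
    then obtain x where "x \<in> V7" "y = p!(x-1)" by blast
    then have "y \<in> set p" using assms(2) by (auto simp: V7_def)
    then show "y \<in> V7" using assms(3) by blast
  qed
qed

lemma hit:
  assumes "\<not> contains_hg V7 E' V7 fano" "distinct p" "length p = 7" "set p \<subseteq> V7"
  shows "\<exists>P\<in>pl p. P \<notin> E'"
proof -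
  have "\<not> (\<forall>e\<in>fano. (\<lambda>i. p!(i-1)) ` e \<in> E')"
    using assms(1) perm_inj[OF assms(2-4)] unfolding contains_hg_def by blast
  then show ?thesis unfolding pl_def by blast
qed



lemma dc: "finite R \<Longrightarrow> sum_list (map (\<lambda>P. card (P \<inter> R)) Ps) = (\<Sum>t\<in>R. length (filter (\<lambda>P. t\<in>P) Ps))"
proof (induction Ps)
  case Nil then show ?case by simp
next
  case (Cons P Ps)
  have "card (P \<inter> R) = (\<Sum>t\<in>R. if t \<in> P then 1 else 0)"
    using Cons.prems by (simp add: sum.If_cases Int_commute)
  moreover have "\<And>t. length (filter (\<lambda>Q. t\<in>Q) (P#Ps)) = (if t \<in> P then 1 else 0) + length (filter (\<lambda>Q. t\<in>Q) Ps)"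
    by simp
  ultimately show ?case using Cons by (simp only: sum.distrib list.map sum_list.Cons)
qed

lemma ge_len: "(\<forall>x\<in>set xs. (1::nat) \<le> f x) \<Longrightarrow> length xs \<le> sum_list (map f xs)"
  by (induction xs) auto

lemma EinT: "uniform3 V7 E' \<Longrightarrow> E' \<subseteq> set Tlist"
  using T7 unfolding uniform3_def by blast



lemma stepA_nat:
  assumes u: "uniform3 V7 E'" and c: "card E' = 30" and nc: "\<not> contains_hg V7 E' V7 fano"
    and A: "{1,2,3} \<notin> E'" and B: "{1,4,5} \<notin> E'"
  shows False
proof -
  have sub: "E' \<subseteq> set Tlist" using EinT[OF u] .
  define M where "M = set Tlist - E'"
  have cM: "card M = 5" unfolding M_def using card_Diff_subset[OF finite_subset[OF sub] sub] card_T c by simp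
  have AM: "{1,2,3} \<in> M" and BM: "{1,4,5} \<in> M" using A B unfolding M_def Tlist_def by auto
  define R where "R = M - {{1,2,3},{1,4,5}}"
  have fR: "finite R" unfolding R_def M_def by simp
  have ne: "({1,2,3}::nat set) \<noteq> {1,4,5}"
  proof -
    have "(2::nat) \<in> {1,2,3}" "(2::nat) \<notin> {1,4,5}" by simp_all
    then show ?thesis by blast
  qed
  have cR: "card R = 3" unfolding R_def using cM AM BM ne by (simp add: card_Diff_subset)
  have RT: "R \<subseteq> set Tlist" unfolding R_def M_def by blast
  have one: "\<forall>P\<in>set (map pl Slist). 1 \<le> card (P \<inter> R)"
  proof
    fix P assume P: "P \<in> set (map pl Slist)"
    then obtain p where p: "p \<in> set Slist" "P = pl p" by auto
    obtain Q where Q: "Q \<in> P" "Q \<notin> E'" using hit[OF nc] Sperm p by blast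
    have "Q \<in> set Tlist" using SinT p Q by blast
    moreover have "Q \<noteq> {1,2,3}" "Q \<noteq> {1,4,5}" using avoid P Q by auto
    ultimately have "Q \<in> R" using Q unfolding R_def M_def by auto
    then have "P \<inter> R \<noteq> {}" using Q by blast
    then show "1 \<le> card (P \<inter> R)" using fR by (simp add: Suc_le_eq card_gt_0_iff)
  qed
  have "20 \<le> sum_list (map (\<lambda>P. card (P \<inter> R)) (map pl Slist))"
    using ge_len[OF one] by (simp add: Slist_def)
  also have "\<dots> = (\<Sum>t\<in>R. length (filter (\<lambda>P. t\<in>P) (map pl Slist)))"
    using dc[OF fR] .
  also have "\<dots> \<le> (\<Sum>t\<in>R. 6)"
    using deg RT by (intro sum_mono) blast
  also have "\<dots> = 18" using cR by simp
  finally show False by simp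
qed



definition Cands :: "nat set list" where
  "Cands = [{1,2,5},{1,2,6},{1,2,7},{1,3,4},{2,3,4},{5,6,7}]"

lemma cand: "\<forall>t\<in>set Tlist. card (t \<inter> {1,2,3}) \<noteq> 1 \<and> card (t \<inter> {1,2,4}) \<noteq> 1 \<and> t \<noteq> {1,2,3} \<and> t \<noteq> {1,2,4} \<longrightarrow> t \<in> set Cands"
  unfolding Tlist_def Cands_def by code_simp

lemma cand3: "\<forall>t1\<in>set Cands. \<forall>t2\<in>set Cands. \<forall>t3\<in>set Cands. t1 \<noteq> t2 \<and> t1 \<noteq> t3 \<and> t2 \<noteq> t3 \<and>
   card (t1 \<inter> t2) \<noteq> 1 \<and> card (t1 \<inter> t3) \<noteq> 1 \<and> card (t2 \<inter> t3) \<noteq> 1 \<longrightarrow>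
   ({t1,t2,t3} = {{1,2,5},{1,2,6},{1,2,7}} \<or> {t1,t2,t3} = {{1,3,4},{2,3,4},{5,6,7}})"
  unfolding Cands_def by code_simp

lemma J7_filter: "J7 = set (filter (\<lambda>e. \<not> {1,2} \<subseteq> e) Tlist)"
  unfolding J7_def using T7 by auto

lemma B7_filter: "B7 = set (filter (\<lambda>e. e \<inter> {1,2,3} \<noteq> {} \<and> e \<inter> {4,5,6,7} \<noteq> {}) Tlist)"
  unfolding B7_def using T7 by auto

lemma J_comp: "set Tlist - ({{1,2,3},{1,2,4}} \<union> {{1,2,5},{1,2,6},{1,2,7}}) = set (filter (\<lambda>e. \<not> {1,2} \<subseteq> e) Tlist)"
  unfolding Tlist_def by code_simp

lemma B_comp: "(\<lambda>e. (\<lambda>i. [4,5,6,7,1,2,3] ! (i - 1)) ` e) ` (set Tlist - ({{1,2,3},{1,2,4}} \<union> {{1,3,4},{2,3,4},{5,6,7}}))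
   = set (filter (\<lambda>e. e \<inter> {1,2,3} \<noteq> {} \<and> e \<inter> {4,5,6,7} \<noteq> {}) Tlist)"
  unfolding Tlist_def by code_simp

lemma sig_img: "(\<lambda>i. [4,5,6,7,1,2,3] ! (i - 1)) ` V7 = V7"
  unfolding V7_def by code_simp

lemma sig_bij: "bij_betw (\<lambda>i. [4,5,6,7,1,2,3::nat] ! (i - 1)) V7 V7"
  unfolding bij_betw_def using sig_img perm_inj[of "[4,5,6,7,1,2,3]"] by (simp add: V7_def)

lemma stepB_nat:
  assumes u: "uniform3 V7 E'" and c: "card E' = 30"
    and A: "{1,2,3} \<notin> E'" and B: "{1,2,4} \<notin> E'"
    and P: "\<forall>X\<in>set Tlist - E'. \<forall>Y\<in>set Tlist - E'. X \<noteq> Y \<longrightarrow> card (X \<inter> Y) \<noteq> 1"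
  shows "iso_hg V7 E' V7 J7 \<or> iso_hg V7 E' V7 B7"
proof -
  have sub: "E' \<subseteq> set Tlist" using EinT[OF u] .
  define M where "M = set Tlist - E'"
  have cM: "card M = 5" unfolding M_def using card_Diff_subset[OF finite_subset[OF sub] sub] card_T c by simp
  have AM: "{1,2,3} \<in> M" and BM: "{1,2,4} \<in> M" using A B unfolding M_def Tlist_def by auto
  have ne: "({1,2,3}::nat set) \<noteq> {1,2,4}"
  proof -
    have "(3::nat) \<in> {1,2,3}" "(3::nat) \<notin> {1,2,4}" by simp_all
    then show ?thesis by blast
  qed
  have h: "\<And>X Y. X \<in> M \<Longrightarrow> Y \<in> M \<Longrightarrow> X \<noteq> Y \<Longrightarrow> card (X \<inter> Y) \<noteq> 1"
    using P unfolding M_def by blast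
  define R where "R = M - {{1,2,3},{1,2,4}}"
  have cR: "card R = 3" unfolding R_def using cM AM BM ne by (simp add: card_Diff_subset)
  then obtain t1 t2 t3 where R: "R = {t1,t2,t3}" and d: "t1 \<noteq> t2" "t2 \<noteq> t3" "t1 \<noteq> t3"
    by (auto simp: card_3_iff)
  have inC: "t \<in> set Cands" if "t \<in> R" for t
  proof -
    have "t \<in> set Tlist" "t \<in> M" "t \<noteq> {1,2,3}" "t \<noteq> {1,2,4}" using that unfolding R_def M_def by auto
    moreover have "card (t \<inter> {1,2,3}) \<noteq> 1" "card (t \<inter> {1,2,4}) \<noteq> 1"
      using h[OF _ AM] h[OF _ BM] calculation by auto
    ultimately show ?thesis using cand by blast
  qed
  have RM: "R \<subseteq> M" unfolding R_def by blast
  have pc: "card (t1 \<inter> t2) \<noteq> 1" "card (t1 \<inter> t3) \<noteq> 1" "card (t2 \<inter> t3) \<noteq> 1"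
    using h RM d unfolding R by auto
  have RR: "R = {{1,2,5},{1,2,6},{1,2,7}} \<or> R = {{1,3,4},{2,3,4},{5,6,7}}"
  proof -
    have c: "t1 \<in> set Cands" "t2 \<in> set Cands" "t3 \<in> set Cands" using inC R by auto
    have "t1 \<noteq> t2 \<and> t1 \<noteq> t3 \<and> t2 \<noteq> t3 \<and>
      card (t1 \<inter> t2) \<noteq> 1 \<and> card (t1 \<inter> t3) \<noteq> 1 \<and> card (t2 \<inter> t3) \<noteq> 1"
      using pc d by simp
    from cand3[rule_format, OF c this] show ?thesis unfolding R .
  qed
  have E: "E' = set Tlist - ({{1,2,3},{1,2,4}} \<union> R)"
    using sub AM BM unfolding R_def M_def by blast
  from RR show ?thesis
  proof
    assume "R = {{1,2,5},{1,2,6},{1,2,7}}"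
    then have "E' = J7" using E J_comp J7_filter by simp
    then show ?thesis unfolding iso_hg_def by (intro disjI1 exI[of _ id]) simp
  next
    assume "R = {{1,3,4},{2,3,4},{5,6,7}}"
    then have "(\<lambda>e. (\<lambda>i. [4,5,6,7,1,2,3] ! (i - 1)) ` e) ` E' = B7" using E B_comp B7_filter by simp
    then show ?thesis unfolding iso_hg_def using sig_bij by blast
  qed
qed



fun idx :: "'a list \<Rightarrow> 'a \<Rightarrow> nat" where
  "idx [] x = 0"
| "idx (y#ys) x = (if x = y then 0 else Suc (idx ys x))"

lemma idx_lt: "x \<in> set xs \<Longrightarrow> idx xs x < length xs"
  by (induction xs) auto

lemma idx_nth: "x \<in> set xs \<Longrightarrow> xs ! idx xs x = x"
  by (induction xs) auto

lemma nth_idx: "distinct xs \<Longrightarrow> i < length xs \<Longrightarrow> idx xs (xs ! i) = i"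
proof (induction xs arbitrary: i)
  case Nil then show ?case by simp
next
  case (Cons y ys)
  then show ?case by (cases i) auto
qed

lemma label:
  assumes fV: "finite V" and cV: "card V = 7" and dx: "distinct xs" and sx: "set xs \<subseteq> V"
  shows "\<exists>g. bij_betw g V V7 \<and> (\<forall>i<length xs. g (xs!i) = Suc i)"
proof -
  define k where "k = length xs"
  have ck: "card (set xs) = k" using dx distinct_card k_def by blast
  have k7: "k \<le> 7" using card_mono[OF fV sx] ck cV by simp
  have cW: "card (V - set xs) = 7 - k" using card_Diff_subset[OF _ sx] ck cV by simp
  have "card {Suc k..7} = 7 - k" by simp
  then have "card (V - set xs) = card {Suc k..7}" using cW by simp
  then have "\<exists>h. bij_betw h (V - set xs) {Suc k..7}"
    using finite_same_card_bij[of "V - set xs" "{Suc k..7}"] fV by blast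
  then obtain h where h: "bij_betw h (V - set xs) {Suc k..7}" by blast
  define g where "g x = (if x \<in> set xs then Suc (idx xs x) else h x)" for x
  have inj: "inj_on g V"
  proof (rule inj_onI)
    fix x y assume x: "x \<in> V" and y: "y \<in> V" and e: "g x = g y"
    show "x = y"
    proof (cases "x \<in> set xs"; cases "y \<in> set xs")
      assume a: "x \<in> set xs" "y \<in> set xs"
      then have "idx xs x = idx xs y" using e unfolding g_def by simp
      then have "xs ! idx xs x = xs ! idx xs y" by simp
      then show ?thesis using idx_nth[OF a(1)] idx_nth[OF a(2)] by simp
    next
      assume a: "x \<in> set xs" "y \<notin> set xs"
      then have "g x \<le> k" using idx_lt k_def unfolding g_def by (simp add: Suc_le_eq)
      moreover have "g y \<in> {Suc k..7}" using a y h unfolding g_def bij_betw_def by auto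
      ultimately show ?thesis using e by simp
    next
      assume a: "x \<notin> set xs" "y \<in> set xs"
      then have "g y \<le> k" using idx_lt k_def unfolding g_def by (simp add: Suc_le_eq)
      moreover have "g x \<in> {Suc k..7}" using a x h unfolding g_def bij_betw_def by auto
      ultimately show ?thesis using e by simp
    next
      assume a: "x \<notin> set xs" "y \<notin> set xs"
      then show ?thesis using e x y h unfolding g_def bij_betw_def inj_on_def by auto
    qed
  qed
  have img: "g ` V \<subseteq> V7"
  proof
    fix z assume "z \<in> g ` V"
    then obtain x where x: "x \<in> V" "z = g x" by blast
    show "z \<in> V7"
    proof (cases "x \<in> set xs")
      case True
      then show ?thesis using x idx_lt[OF True] k_def k7 unfolding g_def V7_def by auto
    next
      case False
      then have "h x \<in> {Suc k..7}" using h x unfolding bij_betw_def by blast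
      then show ?thesis using x False unfolding g_def V7_def by auto
    qed
  qed
  have "card (g ` V) = card V7" using card_image[OF inj] cV by (simp add: V7_def)
  then have "g ` V = V7" using img card_subset_eq[of V7 "g ` V"] by (simp add: V7_def)
  then have "bij_betw g V V7" using inj unfolding bij_betw_def by simp
  moreover have "\<forall>i<length xs. g (xs!i) = Suc i"
    using nth_idx[OF dx] unfolding g_def by simp
  ultimately show ?thesis by blast
qed

definition hyps :: "'a set \<Rightarrow> 'a set set \<Rightarrow> bool" where
  "hyps V E \<longleftrightarrow> uniform3 V E \<and> card V = 7 \<and> card E = 30 \<and> \<not> contains_hg V E V7 fano"

lemma mem_transfer:
  assumes "bij_betw g V V7" "E \<subseteq> Pow V" "A \<subseteq> V"
  shows "g ` A \<in> (\<lambda>e. g ` e) ` E \<longleftrightarrow> A \<in> E"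
proof -
  have "inj_on ((`) g) (Pow V)" using assms(1) inj_on_image_Pow unfolding bij_betw_def by blast
  then show ?thesis using assms(2,3) by (auto simp: inj_on_def)
qed

lemma transfer:
  assumes H: "hyps V E" and g: "bij_betw g V V7"
  shows "hyps V7 ((\<lambda>e. g ` e) ` E)"
proof -
  have u: "uniform3 V E" and cV: "card V = 7" and cE: "card E = 30" and nc: "\<not> contains_hg V E V7 fano"
    using H unfolding hyps_def by auto
  have EV: "E \<subseteq> Pow V" using u unfolding uniform3_def by auto
  have ig: "inj_on g V" using g unfolding bij_betw_def by blast
  have u': "uniform3 V7 ((\<lambda>e. g ` e) ` E)"
    unfolding uniform3_def
  proof (rule conjI)
    show "finite V7" by (simp add: V7_def)
  next
    show "\<forall>e'\<in>(\<lambda>e. g ` e) ` E. e' \<subseteq> V7 \<and> card e' = 3"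
    proof
    fix e' assume "e' \<in> (\<lambda>e. g ` e) ` E"
    then obtain e where e: "e \<in> E" "e' = g ` e" by blast
    have "e \<subseteq> V" "card e = 3" using u e unfolding uniform3_def by auto
    then show "e' \<subseteq> V7 \<and> card e' = 3" using e g ig card_image[OF inj_on_subset[OF ig]]
      unfolding bij_betw_def by auto
    qed
  qed
  have c': "card ((\<lambda>e. g ` e) ` E) = 30"
  proof -
    have "inj_on ((`) g) (Pow V)" using ig inj_on_image_Pow by blast
    then have "inj_on ((`) g) E" using EV inj_on_subset by blast
    then show ?thesis using card_image cE by metis
  qed
  have nc': "\<not> contains_hg V7 ((\<lambda>e. g ` e) ` E) V7 fano"
  proof
    assume "contains_hg V7 ((\<lambda>e. g ` e) ` E) V7 fano"
    then obtain f where f: "inj_on f V7" "f ` V7 \<subseteq> V7" "\<forall>e\<in>fano. f ` e \<in> (\<lambda>e. g ` e) ` E"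
      unfolding contains_hg_def by blast
    define f' where "f' = inv_into V g \<circ> f"
    have "inj_on (inv_into V g) V7" using g inj_on_inv_into unfolding bij_betw_def by (metis order_refl)
    then have "inj_on (inv_into V g) (f ` V7)" using f(2) inj_on_subset by blast
    then have i': "inj_on f' V7" unfolding f'_def using f(1) comp_inj_on by blast
    have s': "f' ` V7 \<subseteq> V" unfolding f'_def using f(2) g
      by (auto simp: bij_betw_def inv_into_into)
    have "\<forall>e\<in>fano. f' ` e \<in> E"
    proof
      fix e assume "e \<in> fano"
      then have "f ` e \<in> (\<lambda>e. g ` e) ` E" using f(3) by simp
      then obtain e0 where e0: "e0 \<in> E" "f ` e = g ` e0" by (metis imageE)
      have "e0 \<subseteq> V" using e0 EV by blast
      then have "inv_into V g ` (g ` e0) = e0" using inv_into_image_cancel[OF ig] by blast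
      moreover have "f' ` e = inv_into V g ` (f ` e)" unfolding f'_def by (rule image_comp[symmetric])
      ultimately show "f' ` e \<in> E" using e0 by simp
    qed
    then have "contains_hg V E V7 fano" unfolding contains_hg_def using i' s' by blast
    then show False using nc by blast
  qed
  show ?thesis unfolding hyps_def using u' c' nc' by (simp add: V7_def)
qed

lemma iso_back:
  assumes g: "bij_betw g V V7" and "iso_hg V7 ((\<lambda>e. g ` e) ` E) V7 X"
  shows "iso_hg V E V7 X"
proof -
  obtain s where s: "bij_betw s V7 V7" "(\<lambda>e. s ` e) ` ((\<lambda>e. g ` e) ` E) = X"
    using assms(2) unfolding iso_hg_def by blast
  have "bij_betw (s \<circ> g) V V7" using g s(1) bij_betw_trans by blast
  moreover have "(\<lambda>e. (s \<circ> g) ` e) ` E = X" using s(2) by (auto simp: image_comp)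
  ultimately show ?thesis unfolding iso_hg_def by blast
qed




lemma fin_num: "card A = numeral n \<Longrightarrow> finite A"
  by (metis card.infinite zero_neq_numeral)

lemma stepA:
  assumes H: "hyps V E" and A: "A \<subseteq> V" "card A = 3" "A \<notin> E"
    and B: "B \<subseteq> V" "card B = 3" "B \<notin> E" and AB: "card (A \<inter> B) = 1"
  shows False
proof -
  have u: "uniform3 V E" and cV: "card V = 7" using H unfolding hyps_def by auto
  have fV: "finite V" using u unfolding uniform3_def by blast
  have EV: "E \<subseteq> Pow V" using u unfolding uniform3_def by auto
  obtain a where a: "A \<inter> B = {a}" using AB card_1_singleton_iff[of "A \<inter> B"] by auto
  have fA: "finite A" using A(2) fin_num by metis
  have fB: "finite B" using B(2) fin_num by metis
  have aA: "a \<in> A" "a \<in> B" using a by auto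
  have "card (A - {a}) = 2" using A(2) aA by (simp add: card_Diff_singleton)
  then obtain b c where bc: "A - {a} = {b,c}" "b \<noteq> c" by (auto simp: card_2_iff)
  have "card (B - {a}) = 2" using B(2) aA by (simp add: card_Diff_singleton)
  then obtain d e where de: "B - {a} = {d,e}" "d \<noteq> e" by (auto simp: card_2_iff)
  have Aeq: "A = {a,b,c}" using bc a by blast
  have Beq: "B = {a,d,e}" using de a by blast
  have dist: "distinct [a,b,c,d,e]" using bc de a by auto
  have sx: "set [a,b,c,d,e] \<subseteq> V" using Aeq Beq A(1) B(1) by auto
  obtain g where g: "bij_betw g V V7" and gv: "\<forall>i<length [a,b,c,d,e]. g ([a,b,c,d,e]!i) = Suc i"
    using label[OF fV cV dist sx] by blast
  have "g a = 1" "g b = 2" "g c = 3" "g d = 4" "g e = 5"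
    using gv[rule_format, of 0] gv[rule_format, of 1] gv[rule_format, of 2]
      gv[rule_format, of 3] gv[rule_format, of 4] by auto
  then have gA: "g ` A = {1,2,3}" and gB: "g ` B = {1,4,5}" unfolding Aeq Beq by auto
  have H': "hyps V7 ((\<lambda>e. g ` e) ` E)" using transfer[OF H g] .
  have "{1,2,3} \<notin> (\<lambda>e. g ` e) ` E" using mem_transfer[OF g EV A(1)] A(3) gA by simp
  moreover have "{1,4,5} \<notin> (\<lambda>e. g ` e) ` E" using mem_transfer[OF g EV B(1)] B(3) gB by simp
  ultimately show False using stepA_nat H' unfolding hyps_def by blast
qed

lemma pairwise_nat:
  assumes "hyps V7 E'"
  shows "\<forall>X\<in>set Tlist - E'. \<forall>Y\<in>set Tlist - E'. X \<noteq> Y \<longrightarrow> card (X \<inter> Y) \<noteq> 1"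
proof (intro ballI impI)
  fix X Y assume X: "X \<in> set Tlist - E'" and Y: "Y \<in> set Tlist - E'" and "X \<noteq> Y"
  show "card (X \<inter> Y) \<noteq> 1"
  proof
    assume c: "card (X \<inter> Y) = 1"
    have "X \<subseteq> V7" "card X = 3" "Y \<subseteq> V7" "card Y = 3" using X Y T7_sub0 by auto
    then show False using stepA[OF assms _ _ _ _ _ _ c] X Y by blast
  qed
qed

lemma choose73: "(7::nat) choose 3 = 35" by code_simp

theorem lemma2p2:
  fixes V :: "'a set" and E :: "'a set set"
  assumes "uniform3 V E"
    and "card V = 7"
    and "card E = 30"
    and "\<not> contains_hg V E V7 fano"
  shows "iso_hg V E V7 B7 \<or> iso_hg V E V7 J7"
proof -
  have H: "hyps V E" using assms unfolding hyps_def by blast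
  have fV: "finite V" using assms(1) unfolding uniform3_def by blast
  have EV: "E \<subseteq> Pow V" using assms(1) unfolding uniform3_def by auto
  define T where "T = {e. e \<subseteq> V \<and> card e = 3}"
  have cT: "card T = 35" unfolding T_def using n_subsets[OF fV, of 3] assms(2) choose73 by simp
  have ET: "E \<subseteq> T" using assms(1) unfolding uniform3_def T_def by auto
  have fT: "finite T" using cT fin_num by metis
  define M where "M = T - E"
  have cM: "card M = 5" unfolding M_def using card_Diff_subset[OF finite_subset[OF ET fT] ET] cT assms(3) by simp
  have Mmem: "X \<subseteq> V \<and> card X = 3 \<and> X \<notin> E" if "X \<in> M" for X using that unfolding M_def T_def by auto
  have "\<exists>A\<in>M. \<exists>B\<in>M. A \<noteq> B \<and> A \<inter> B \<noteq> {}"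
  proof (rule ccontr)
    assume "\<not> ?thesis"
    then have pd: "pairwise disjnt M" unfolding pairwise_def disjnt_def by blast
    have fin: "\<And>X. X \<in> M \<Longrightarrow> finite X" using Mmem fin_num by metis
    have "card (\<Union>M) = sum card M" using card_Union_disjoint[OF pd fin] .
    also have "\<dots> = sum (\<lambda>_. 3) M" using Mmem by (intro sum.cong) auto
    also have "\<dots> = 15" using cM by simp
    finally have "card (\<Union>M) = 15" .
    moreover have "\<Union>M \<subseteq> V" using Mmem by blast
    then have "card (\<Union>M) \<le> 7" using card_mono[OF fV] assms(2) by metis
    ultimately show False by simp
  qed
  then obtain A B where AM: "A \<in> M" and BM: "B \<in> M" and ne: "A \<noteq> B" and ABne: "A \<inter> B \<noteq> {}" by blast
  have A: "A \<subseteq> V" "card A = 3" "A \<notin> E" using Mmem[OF AM] by auto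
  have B: "B \<subseteq> V" "card B = 3" "B \<notin> E" using Mmem[OF BM] by auto
  have fA: "finite A" using A(2) fin_num by metis
  have fB: "finite B" using B(2) fin_num by metis
  have c1: "card (A \<inter> B) \<ge> 1" using ABne fA by (simp add: Suc_le_eq card_gt_0_iff)
  have c3: "card (A \<inter> B) \<noteq> 3"
  proof
    assume c: "card (A \<inter> B) = 3"
    have "A \<inter> B = A" using card_subset_eq[OF fA, of "A \<inter> B"] c A(2) by auto
    moreover have "A \<inter> B = B" using card_subset_eq[OF fB, of "A \<inter> B"] c B(2) by auto
    ultimately show False using ne by simp
  qed
  have "card (A \<inter> B) \<le> 3" using card_mono[OF fA, of "A \<inter> B"] A(2) by simp
  then have "card (A \<inter> B) = 1 \<or> card (A \<inter> B) = 2" using c1 c3 by linarith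
  then show ?thesis
  proof
    assume "card (A \<inter> B) = 1"
    then show ?thesis using stepA[OF H A B] by blast
  next
    assume c2: "card (A \<inter> B) = 2"
    then obtain a b where ab: "A \<inter> B = {a,b}" "a \<noteq> b" by (auto simp: card_2_iff)
    have sAB: "{a,b} \<subseteq> A" "{a,b} \<subseteq> B" using ab by auto
    have c2': "card {a,b} = 2" using ab by simp
    have "card (A - {a,b}) = 1" using A(2) c2' card_Diff_subset[OF _ sAB(1)] by simp
    then obtain c where c: "A - {a,b} = {c}" using card_1_singleton_iff[of "A - {a,b}"] by auto
    have "card (B - {a,b}) = 1" using B(2) c2' card_Diff_subset[OF _ sAB(2)] by simp
    then obtain d where d: "B - {a,b} = {d}" using card_1_singleton_iff[of "B - {a,b}"] by auto
    have Aeq: "A = {a,b,c}" using c ab by blast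
    have Beq: "B = {a,b,d}" using d ab by blast
    have "c \<noteq> d" using ne Aeq Beq by auto
    then have dist: "distinct [a,b,c,d]" using c d ab by auto
    have sx: "set [a,b,c,d] \<subseteq> V" using Aeq Beq A(1) B(1) by auto
    obtain g where g: "bij_betw g V V7" and gv: "\<forall>i<length [a,b,c,d]. g ([a,b,c,d]!i) = Suc i"
      using label[OF fV assms(2) dist sx] by blast
    have "g a = 1" "g b = 2" "g c = 3" "g d = 4"
      using gv[rule_format, of 0] gv[rule_format, of 1] gv[rule_format, of 2]
        gv[rule_format, of 3] by auto
    then have gA: "g ` A = {1,2,3}" and gB: "g ` B = {1,2,4}" unfolding Aeq Beq by auto
    have H': "hyps V7 ((\<lambda>e. g ` e) ` E)" using transfer[OF H g] .
    have nA: "{1,2,3} \<notin> (\<lambda>e. g ` e) ` E" using mem_transfer[OF g EV A(1)] A(3) gA by simp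
    have nB: "{1,2,4} \<notin> (\<lambda>e. g ` e) ` E" using mem_transfer[OF g EV B(1)] B(3) gB by simp
    have "iso_hg V7 ((\<lambda>e. g ` e) ` E) V7 J7 \<or> iso_hg V7 ((\<lambda>e. g ` e) ` E) V7 B7"
      using stepB_nat[OF _ _ nA nB pairwise_nat[OF H']] H' unfolding hyps_def by blast
    then show ?thesis using iso_back[OF g] by blast
  qed
qed

end
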